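(* Let $(X,\|\cdot,\cdot\|)$ be a linear 2-normed space and let $E$ be a nonempty (sequentially) closed and bounded subset of $X$. Let $T:E\to X$ be a strong accretive mapping. If $(I+T)(E)\supset E$, then the equation $Tx=\theta$ has a solution $x\in E$, where $\theta$ is the zero vector of $X$.
   Context: A linear 2-normed space is a real linear space $X$ of dimension greater than 1 with a function $\|\cdot,\cdot\|:X\times X\to\mathbb{R}$ such that: $\|x,y\|=0$ iff $x,y$ are linearly dependent; $\|x,y\|=\|y,x\|$; $\|\alpha x,y\|=|\alpha|\,\|x,y\|$; $\|x+y,z\|\le\|x,z\|+\|y,z\|$. A sequence $x_n\to x$ means $\|x_n-x,z\|\to0$ for every $z\in X$. $E$ is (sequentially) closed if every limit of a sequence in $E$ lies in $E$. For $e\in E$, $E$ is $e$-bounded if there is $M>0$ with $\|x,e\|\le M$ for all $x\in E$; $E$ is bounded if it is $e$-bounded for every $e\in E$. A mapping $T$ is strong accretive if, for a constant $k\in(0,1)$, for every $z\in X$ one has $\|(\lambda-k)(x-y),z\|\le\|(\lambda-1)(x-y)+(Tx-Ty),z\|$ for all $x,y$ in the domain of $T$ and all $\lambda>k$. *)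

theory Defs
  imports "HOL-Analysis.Analysis"
begin

definition lin_dep2 :: "'a::real_vector \<Rightarrow> 'a \<Rightarrow> bool" where
  "lin_dep2 x y \<longleftrightarrow> (\<exists>a b::real. (a \<noteq> 0 \<or> b \<noteq> 0) \<and> a *\<^sub>R x + b *\<^sub>R y = 0)"

definition two_normed :: "('a::real_vector \<Rightarrow> 'a \<Rightarrow> real) \<Rightarrow> bool" where
  "two_normed N \<longleftrightarrow>
     (\<exists>u v::'a. \<not> lin_dep2 u v) \<and>
     (\<forall>x y. N x y = 0 \<longleftrightarrow> lin_dep2 x y) \<and>
     (\<forall>x y. N x y = N y x) \<and>
     (\<forall>(a::real) x y. N (a *\<^sub>R x) y = \<bar>a\<bar> * N x y) \<and>
     (\<forall>x y z. N (x + y) z \<le> N x z + N y z)"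

definition conv2 :: "('a::real_vector \<Rightarrow> 'a \<Rightarrow> real) \<Rightarrow> (nat \<Rightarrow> 'a) \<Rightarrow> 'a \<Rightarrow> bool" where
  "conv2 N s x \<longleftrightarrow> (\<forall>z. (\<lambda>n. N (s n - x) z) \<longlonglongrightarrow> 0)"

definition closed2 :: "('a::real_vector \<Rightarrow> 'a \<Rightarrow> real) \<Rightarrow> 'a set \<Rightarrow> bool" where
  "closed2 N E \<longleftrightarrow> (\<forall>s x. (\<forall>n. s n \<in> E) \<longrightarrow> conv2 N s x \<longrightarrow> x \<in> E)"

definition e_bounded2 :: "('a::real_vector \<Rightarrow> 'a \<Rightarrow> real) \<Rightarrow> 'a set \<Rightarrow> 'a \<Rightarrow> bool" where
  "e_bounded2 N E e \<longleftrightarrow> (\<exists>M>0. \<forall>x\<in>E. N x e \<le> M)"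

definition bounded2 :: "('a::real_vector \<Rightarrow> 'a \<Rightarrow> real) \<Rightarrow> 'a set \<Rightarrow> bool" where
  "bounded2 N E \<longleftrightarrow> (\<forall>e\<in>E. e_bounded2 N E e)"

definition strong_accretive2 ::
  "('a::real_vector \<Rightarrow> 'a \<Rightarrow> real) \<Rightarrow> 'a set \<Rightarrow> ('a \<Rightarrow> 'a) \<Rightarrow> bool" where
  "strong_accretive2 N E T \<longleftrightarrow>
     (\<exists>k::real. 0 < k \<and> k < 1 \<and>
        (\<forall>z x y (l::real). x \<in> E \<longrightarrow> y \<in> E \<longrightarrow> l > k \<longrightarrow>
           N ((l - k) *\<^sub>R (x - y)) z \<le> N ((l - 1) *\<^sub>R (x - y) + (T x - T y)) z))"

end

theory Submission
  imports Defs
begin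

lemma tn_scale: "two_normed N \<Longrightarrow> N (a *\<^sub>R x) y = \<bar>a\<bar> * N x y"
  unfolding two_normed_def by blast

lemma tn_tri: "two_normed N \<Longrightarrow> N (x + y) z \<le> N x z + N y z"
  unfolding two_normed_def by blast

lemma tn_zero_iff: "two_normed N \<Longrightarrow> N x y = 0 \<longleftrightarrow> lin_dep2 x y"
  unfolding two_normed_def by blast

lemma tn_self: "two_normed N \<Longrightarrow> N x x = 0"
  by (simp add: tn_zero_iff lin_dep2_def) (rule exI[of _ 1], rule exI[of _ "-1"], simp)

lemma tn_minus_commute: "two_normed N \<Longrightarrow> N (x - y) z = N (y - x) z"
proof -
  assume a: "two_normed N"
  have "y - x = (-1) *\<^sub>R (x - y)" by simp
  then show ?thesis using tn_scale[OF a, of "-1" "x - y" z] by simp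
qed

lemma tn_nonneg: "two_normed N \<Longrightarrow> 0 \<le> N x z"
proof -
  assume a: "two_normed N"
  have "N (x + (-x)) z \<le> N x z + N (-x) z" by (rule tn_tri[OF a])
  moreover have "N (-x) z = N x z" using tn_scale[OF a, of "-1" x z] by simp
  moreover have "N (x + (-x)) z = 0" using tn_scale[OF a, of 0 x z] by simp
  ultimately show ?thesis by linarith
qed

lemma tn_tri_sub: "two_normed N \<Longrightarrow> N (x - y) z \<le> N (x - w) z + N (w - y) z"
  using tn_tri[of N "x - w" "w - y" z] by simp

lemma tn_dep: assumes "N u v = 0" "v \<noteq> 0" "two_normed N" shows "\<exists>t. u = t *\<^sub>R v"
proof -
  from assms obtain a b :: real where ab: "a \<noteq> 0 \<or> b \<noteq> 0" "a *\<^sub>R u + b *\<^sub>R v = 0"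
    using tn_zero_iff[OF assms(3)] unfolding lin_dep2_def by blast
  have "a \<noteq> 0" using ab assms(2) by auto
  have "a *\<^sub>R u = - (b *\<^sub>R v)" using ab(2) by (simp add: eq_neg_iff_add_eq_0)
  then have "(1/a) *\<^sub>R (a *\<^sub>R u) = (1/a) *\<^sub>R (- (b *\<^sub>R v))" by simp
  then have "u = (- b / a) *\<^sub>R v" using \<open>a \<noteq> 0\<close> by simp
  then show ?thesis by blast
qed

lemma tn_all0: fixes N :: "'a::real_vector \<Rightarrow> 'a \<Rightarrow> real" assumes "two_normed N" "\<And>z. N u z = 0" shows "u = 0"
proof (rule ccontr)
  assume u: "u \<noteq> 0"
  obtain p q :: 'a where pq: "\<not> lin_dep2 p q" using assms(1) unfolding two_normed_def by meson
  have "N p u = 0" "N q u = 0" using assms tn_zero_iff[OF assms(1)]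
    by (metis assms(1) two_normed_def)+
  then obtain s t where "p = s *\<^sub>R u" "q = t *\<^sub>R u" using tn_dep[OF _ u assms(1)] by blast
  then have "lin_dep2 p q"
    unfolding lin_dep2_def
    apply (cases "s = 0")
     apply (rule exI[of _ 1], rule exI[of _ 0], simp)
    apply (rule exI[of _ t], rule exI[of _ "-s"], simp)
    done
  then show False using pq by blast
qed


theorem theorem3p12:
  fixes N :: "'a::real_vector \<Rightarrow> 'a \<Rightarrow> real"
    and E :: "'a set"
    and T :: "'a \<Rightarrow> 'a"
  assumes "two_normed N"
    and "E \<noteq> {}"
    and "closed2 N E"
    and "bounded2 N E"
    and "strong_accretive2 N E T"
    and "E \<subseteq> (\<lambda>x. x + T x) ` E"
  shows "\<exists>x\<in>E. T x = 0"
proof -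
  note tn = assms(1)
  obtain k :: real where k: "0 < k" "k < 1"
    and acc: "\<And>z x y l. x \<in> E \<Longrightarrow> y \<in> E \<Longrightarrow> l > k \<Longrightarrow>
           N ((l - k) *\<^sub>R (x - y)) z \<le> N ((l - 1) *\<^sub>R (x - y) + (T x - T y)) z"
    using assms(5) unfolding strong_accretive2_def by blast
  define c where "c = 1 / (2 - k)"
  have c: "0 < c" "c < 1" using k by (auto simp: c_def)
  have contr: "N (x1 - x2) z \<le> c * N ((x1 + T x1) - (x2 + T x2)) z"
    if "x1 \<in> E" "x2 \<in> E" for x1 x2 z
  proof -
    have "N ((2 - k) *\<^sub>R (x1 - x2)) z \<le> N ((2 - 1) *\<^sub>R (x1 - x2) + (T x1 - T x2)) z"
      using acc[OF that, of 2 z] k by simp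
    moreover have "(2 - 1) *\<^sub>R (x1 - x2) + (T x1 - T x2) = (x1 + T x1) - (x2 + T x2)"
      by (simp add: algebra_simps)
    moreover have "N ((2 - k) *\<^sub>R (x1 - x2)) z = (2 - k) * N (x1 - x2) z"
      using tn_scale[OF tn, of "2 - k" "x1 - x2" z] k by simp
    ultimately have "(2 - k) * N (x1 - x2) z \<le> N ((x1 + T x1) - (x2 + T x2)) z"
      by (simp add: algebra_simps)
    then show ?thesis using k unfolding c_def by (simp add: field_simps)
  qed
  define g where "g y = (SOME x. x \<in> E \<and> x + T x = y)" for y
  have gE: "g y \<in> E \<and> g y + T (g y) = y" if "y \<in> E" for y
  proof -
    have "\<exists>x. x \<in> E \<and> x + T x = y" using assms(6) that by force
    then show ?thesis unfolding g_def by (rule someI_ex)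
  qed
  obtain x0 where x0: "x0 \<in> E" using assms(2) by blast
  define xs where "xs n = (g ^^ n) x0" for n
  have xsE: "xs n \<in> E" for n
    by (induction n) (auto simp: xs_def x0 gE)
  have xs_step: "xs (Suc n) + T (xs (Suc n)) = xs n" for n
    using gE[OF xsE[of n]] by (simp add: xs_def)
  define D where "D n = xs (Suc n) - xs n" for n
  have Dc: "N (D (Suc n)) z \<le> c * N (D n) z" for n z
    using contr[OF xsE[of "Suc (Suc n)"] xsE[of "Suc n"], of z] xs_step[of n] xs_step[of "Suc n"]
    by (simp add: D_def)
  show ?thesis
  proof (cases "D 0 = 0")
    case True
    then have "xs 1 = x0" by (simp add: D_def xs_def)
    then have "T (xs 1) = 0" using xs_step[of 0] by (simp add: xs_def)
    then show ?thesis using xsE[of 1] by blast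
  next
    case False
    define d where "d = D 0"
    have d: "d \<noteq> 0" using False d_def by simp
    have Dpar: "\<exists>s. D n = s *\<^sub>R d" for n
    proof (induction n)
      case 0
      then show ?case by (rule exI[of _ 1]) (simp add: d_def)
    next
      case (Suc n)
      then obtain s where s: "D n = s *\<^sub>R d" by blast
      show ?case
      proof (cases "s = 0")
        case True
        have "N (D (Suc n)) z = 0" for z
          using Dc[of n z] s True tn_nonneg[OF tn, of "D (Suc n)" z] tn_scale[OF tn, of 0 d z] by simp
        then have "D (Suc n) = 0" by (rule tn_all0[OF tn])
        then show ?thesis by (rule_tac exI[of _ 0]) simp
      next
        case False
        have "N (D (Suc n)) (D n) = 0"
          using Dc[of n "D n"] tn_self[OF tn, of "D n"] tn_nonneg[OF tn, of "D (Suc n)" "D n"] by simp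
        moreover have "D n \<noteq> 0" using s False d by simp
        ultimately obtain t where "D (Suc n) = t *\<^sub>R D n" using tn_dep[OF _ _ tn] by blast
        then have "D (Suc n) = (t * s) *\<^sub>R d" using s by simp
        then show ?thesis by blast
      qed
    qed
    define \<sigma> where "\<sigma> n = (SOME s. D n = s *\<^sub>R d)" for n
    have D\<sigma>: "D n = \<sigma> n *\<^sub>R d" for n
      unfolding \<sigma>_def using someI_ex[OF Dpar[of n]] .
    obtain z0 where z0: "N d z0 \<noteq> 0" using tn_all0[OF tn] d by blast
    then have z0p: "N d z0 > 0" using tn_nonneg[OF tn, of d z0] by simp
    have Dbound: "N (D n) z \<le> c ^ n * N (D 0) z" for n z
    proof (induction n)
      case 0
      then show ?case by simp
    next
      case (Suc n)
      have "N (D (Suc n)) z \<le> c * N (D n) z" by (rule Dc)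
      also have "\<dots> \<le> c * (c ^ n * N (D 0) z)" using Suc c by (simp add: mult_left_mono)
      finally show ?case by simp
    qed
    have \<sigma>bound: "\<bar>\<sigma> n\<bar> \<le> c ^ n" for n
    proof -
      have "\<bar>\<sigma> n\<bar> * N d z0 \<le> c ^ n * N d z0"
        using Dbound[of n z0] D\<sigma>[of n] tn_scale[OF tn, of "\<sigma> n" d z0] d_def by simp
      then show ?thesis using z0p by simp
    qed
    have summ: "summable \<sigma>"
      by (rule summable_comparison_test[of _ "\<lambda>n. c ^ n"])
         (use \<sigma>bound c in \<open>auto intro!: summable_geometric\<close>)
    have xs_form: "xs n = x0 + (\<Sum>i<n. \<sigma> i) *\<^sub>R d" for n
    proof (induction n)
      case 0
      then show ?case by (simp add: xs_def)
    next
      case (Suc n)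
      have "xs (Suc n) = xs n + D n" by (simp add: D_def)
      then show ?case using Suc D\<sigma>[of n] by (simp add: scaleR_add_left)
    qed
    define S where "S = suminf \<sigma>"
    define x where "x = x0 + S *\<^sub>R d"
    have conv: "(\<lambda>n. N (xs n - x) z) \<longlonglongrightarrow> 0" for z
    proof -
      have eq: "N (xs n - x) z = \<bar>(\<Sum>i<n. \<sigma> i) - S\<bar> * N d z" for n
      proof -
        have "xs n - x = ((\<Sum>i<n. \<sigma> i) - S) *\<^sub>R d"
          by (simp add: xs_form x_def scaleR_diff_left)
        then show ?thesis using tn_scale[OF tn] by simp
      qed
      have "(\<lambda>n. (\<Sum>i<n. \<sigma> i) - S) \<longlonglongrightarrow> 0"
        using LIM_zero[OF summable_LIMSEQ[OF summ]] unfolding S_def .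
      then have "(\<lambda>n. \<bar>(\<Sum>i<n. \<sigma> i) - S\<bar> * N d z) \<longlonglongrightarrow> 0"
        by (intro tendsto_mult_left_zero tendsto_rabs_zero)
      then show ?thesis unfolding eq .
    qed
    have xE: "x \<in> E"
      using assms(3) xsE conv unfolding closed2_def conv2_def by blast
    obtain w where w: "w \<in> E" "x = w + T w" using assms(6) xE by blast
    have "N (x - w) z \<le> 0" for z
    proof (rule LIMSEQ_le_const)
      show "(\<lambda>n. N (xs (Suc n) - x) z + c * N (xs n - x) z) \<longlonglongrightarrow> 0"
        using tendsto_add[OF LIMSEQ_Suc[OF conv[of z]] tendsto_mult_right_zero[OF conv[of z], of c]]
        by simp
      show "\<exists>M. \<forall>n\<ge>M. N (x - w) z \<le> N (xs (Suc n) - x) z + c * N (xs n - x) z"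
      proof (intro exI allI impI)
        fix n
        have "N (x - w) z \<le> N (x - xs (Suc n)) z + N (xs (Suc n) - w) z"
          by (rule tn_tri_sub[OF tn])
        also have "N (x - xs (Suc n)) z = N (xs (Suc n) - x) z"
          by (rule tn_minus_commute[OF tn])
        also have "N (xs (Suc n) - w) z \<le> c * N (xs n - x) z"
          using contr[OF xsE[of "Suc n"] w(1), of z] xs_step[of n] w(2) by simp
        finally show "N (x - w) z \<le> N (xs (Suc n) - x) z + c * N (xs n - x) z" by simp
      qed
    qed
    then have "N (x - w) z = 0" for z using tn_nonneg[OF tn, of "x - w" z] by (meson order.antisym)
    then have "x - w = 0" by (rule tn_all0[OF tn])
    then have "T w = 0" using w(2) by simp
    then show ?thesis using w(1) by blast
  qed
qed

end
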